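(* Let $n\ge1$ and $c:E_n\to\mathbb{C}$ an admissible edge weighting of $Q_n$. Then there is a unique unital $\ast$-homomorphism $\rho_c: C^\ast(Q_n)\to M_{U_n(c)} = B(\mathbb{C}^{U_n(c)})$ with $\rho_c(p_i) = E_{ii}$ for $i\in U_n(c)$, $\rho_c(p_j) = \big[c(i_1j)\overline{c(i_2j)}\big]_{i_1,i_2\in U_n(c)}$ for $j\in V_n(c)$, and $\rho_c(p_x)=0$ for $x\notin U_n(c)\cup V_n(c)$ (where $c(ij):=0$ if $i,j$ are not adjacent). Moreover, for every $j\in V_n(c)$, $\rho_c(p_j)$ is the projection onto the span of the vector $\psi_j = (c(ij))_{i\in U_n(c)}\in\mathbb{C}^{U_n(c)}$.
   Context: For $n\ge1$, identify integers $0\le i<2^n$ with their $n$-digit binary representations; $i\#k$ is $i$ with its $k$-th digit flipped. The hypercube $Q_n$ has vertex classes $U_n$ (even number of $1$'s) and $V_n$ (odd number of $1$'s), edge set $E_n$ of pairs $ij$ ($i\in U_n$, $j\in V_n$, $j=i\#k$ for some $k<n$); $\mathcal N(x)$ denotes the neighbors of $x$. $C^\ast(Q_n)$ is the universal unital C*-algebra generated by projections $p_x$ ($x\in U_n\cup V_n$) with $\sum_{u\in U_n}p_u=1=\sum_{v\in V_n}p_v$ and $p_up_v=0$ when $u,v$ are non-adjacent. For $c:E_n\to\mathbb{C}$, $Q_n(c) = (U_n(c),V_n(c),E_n(c))$ is the subgraph consisting of the edges with $c(ij)\ne0$ and their endpoints. $c$ is admissible if $\sum_{i\in\mathcal N(j_1)\cap\mathcal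 N(j_2)}c(ij_1)\overline{c(ij_2)}=\delta_{j_1j_2}$ for all $j_1,j_2\in V_n(c)$ and $\sum_{j\in\mathcal N(i_1)\cap\mathcal N(i_2)}c(i_1j)\overline{c(i_2j)}=\delta_{i_1i_2}$ for all $i_1,i_2\in U_n(c)$. $E_{ii}$ are the standard matrix units. *)

theory Defs
  imports Complex_Main
begin

definition ones :: "nat \<Rightarrow> nat \<Rightarrow> nat" where
  "ones n i = card {k. k < n \<and> bit i k}"

definition Uv :: "nat \<Rightarrow> nat set" where
  "Uv n = {i. i < 2 ^ n \<and> even (ones n i)}"

definition Vv :: "nat \<Rightarrow> nat set" where
  "Vv n = {i. i < 2 ^ n \<and> odd (ones n i)}"

definition flipd :: "nat \<Rightarrow> nat \<Rightarrow> nat" where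
  "flipd i k = flip_bit k i"

definition edge :: "nat \<Rightarrow> nat \<Rightarrow> nat \<Rightarrow> bool" where
  "edge n i j \<longleftrightarrow> i \<in> Uv n \<and> j \<in> Vv n \<and> (\<exists>k<n. j = flipd i k)"

definition En :: "nat \<Rightarrow> (nat \<times> nat) set" where
  "En n = {(i, j). edge n i j}"

definition nbrs :: "nat \<Rightarrow> nat \<Rightarrow> nat set" where
  "nbrs n x = {y. edge n x y \<or> edge n y x}"

text \<open>An edge weighting c : E_n -> C is modelled as a function of (i,j); only values on
  edges matter, and cw extends it by 0 to non-adjacent pairs.\<close>
definition cw :: "nat \<Rightarrow> (nat \<Rightarrow> nat \<Rightarrow> complex) \<Rightarrow> nat \<Rightarrow> nat \<Rightarrow> complex" where
  "cw n c i j = (if edge n i j then c i j else 0)"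

definition Uc :: "nat \<Rightarrow> (nat \<Rightarrow> nat \<Rightarrow> complex) \<Rightarrow> nat set" where
  "Uc n c = {i. \<exists>j. edge n i j \<and> c i j \<noteq> 0}"

definition Vc :: "nat \<Rightarrow> (nat \<Rightarrow> nat \<Rightarrow> complex) \<Rightarrow> nat set" where
  "Vc n c = {j. \<exists>i. edge n i j \<and> c i j \<noteq> 0}"

definition admissible :: "nat \<Rightarrow> (nat \<Rightarrow> nat \<Rightarrow> complex) \<Rightarrow> bool" where
  "admissible n c \<longleftrightarrow>
     (\<forall>j1\<in>Vc n c. \<forall>j2\<in>Vc n c.
        (\<Sum>i\<in>nbrs n j1 \<inter> nbrs n j2. c i j1 * cnj (c i j2)) = (if j1 = j2 then 1 else 0)) \<and>
     (\<forall>i1\<in>Uc n c. \<forall>i2\<in>Uc n c.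
        (\<Sum>j\<in>nbrs n i1 \<inter> nbrs n i2. c i1 j * cnj (c i2 j)) = (if i1 = i2 then 1 else 0))"

text \<open>A matrix in M_I is a function nat => nat => complex vanishing outside I x I;
  a vector in C^I is a function nat => complex vanishing outside I.\<close>
definition mmult :: "nat set \<Rightarrow> (nat \<Rightarrow> nat \<Rightarrow> complex) \<Rightarrow> (nat \<Rightarrow> nat \<Rightarrow> complex) \<Rightarrow> nat \<Rightarrow> nat \<Rightarrow> complex" where
  "mmult I A B = (\<lambda>a b. \<Sum>k\<in>I. A a k * B k b)"

definition madj :: "(nat \<Rightarrow> nat \<Rightarrow> complex) \<Rightarrow> nat \<Rightarrow> nat \<Rightarrow> complex" where
  "madj A = (\<lambda>a b. cnj (A b a))"

definition mid :: "nat set \<Rightarrow> nat \<Rightarrow> nat \<Rightarrow> complex" where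
  "mid I = (\<lambda>a b. if a \<in> I \<and> a = b then 1 else 0)"

definition mvec :: "nat set \<Rightarrow> (nat \<Rightarrow> nat \<Rightarrow> complex) \<Rightarrow> (nat \<Rightarrow> complex) \<Rightarrow> nat \<Rightarrow> complex" where
  "mvec I A w = (\<lambda>a. \<Sum>b\<in>I. A a b * w b)"

definition is_proj :: "nat set \<Rightarrow> (nat \<Rightarrow> nat \<Rightarrow> complex) \<Rightarrow> bool" where
  "is_proj I P \<longleftrightarrow> mmult I P P = P \<and> madj P = P"

text \<open>Universal property of C*(Q_n): a family (P_x) in M_I defines a (necessarily unique,
  since the p_x generate C*(Q_n)) unital *-homomorphism rho : C*(Q_n) -> M_I with
  rho(p_x) = P_x iff the P_x satisfy the defining relations of C*(Q_n) in M_I.\<close>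
definition Qn_relations :: "nat \<Rightarrow> nat set \<Rightarrow> (nat \<Rightarrow> nat \<Rightarrow> nat \<Rightarrow> complex) \<Rightarrow> bool" where
  "Qn_relations n I P \<longleftrightarrow>
     (\<forall>x\<in>Uv n \<union> Vv n. is_proj I (P x)) \<and>
     (\<lambda>a b. \<Sum>u\<in>Uv n. P u a b) = mid I \<and>
     (\<lambda>a b. \<Sum>v\<in>Vv n. P v a b) = mid I \<and>
     (\<forall>u\<in>Uv n. \<forall>v\<in>Vv n. \<not> edge n u v \<longrightarrow> mmult I (P u) (P v) = (\<lambda>a b. 0))"

definition extends_to_unital_star_hom :: "nat \<Rightarrow> nat set \<Rightarrow> (nat \<Rightarrow> nat \<Rightarrow> nat \<Rightarrow> complex) \<Rightarrow> bool" where
  "extends_to_unital_star_hom n I P \<longleftrightarrow> finite I \<and>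
     (\<forall>x a b. (a \<notin> I \<or> b \<notin> I) \<longrightarrow> P x a b = 0) \<and> Qn_relations n I P"

definition rho :: "nat \<Rightarrow> (nat \<Rightarrow> nat \<Rightarrow> complex) \<Rightarrow> nat \<Rightarrow> nat \<Rightarrow> nat \<Rightarrow> complex" where
  "rho n c x = (if x \<in> Uc n c then (\<lambda>a b. if a = x \<and> b = x then 1 else 0)
     else if x \<in> Vc n c then
       (\<lambda>a b. if a \<in> Uc n c \<and> b \<in> Uc n c then cw n c a x * cnj (cw n c b x) else 0)
     else (\<lambda>a b. 0))"

definition psi :: "nat \<Rightarrow> (nat \<Rightarrow> nat \<Rightarrow> complex) \<Rightarrow> nat \<Rightarrow> nat \<Rightarrow> complex" where
  "psi n c j = (\<lambda>a. if a \<in> Uc n c then cw n c a j else 0)"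

end

theory Submission
  imports Defs
begin

lemma edge_UV: "edge n i j \<Longrightarrow> i \<in> Uv n \<and> j \<in> Vv n"
  by (simp add: edge_def)

lemma UV_disj: "x \<in> Uv n \<Longrightarrow> x \<notin> Vv n"
  by (simp add: Uv_def Vv_def)

lemma finite_Uv: "finite (Uv n)"
  by (rule finite_subset[of _ "{..<2^n}"]) (auto simp: Uv_def)

lemma finite_Vv: "finite (Vv n)"
  by (rule finite_subset[of _ "{..<2^n}"]) (auto simp: Vv_def)

lemma Uc_sub: "Uc n c \<subseteq> Uv n"
  by (auto simp: Uc_def edge_def)

lemma Vc_sub: "Vc n c \<subseteq> Vv n"
  by (auto simp: Vc_def edge_def)

lemma finite_Uc: "finite (Uc n c)"
  using finite_subset[OF Uc_sub finite_Uv] .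

lemma cw_nz: "cw n c a v \<noteq> 0 \<Longrightarrow> a \<in> Uc n c \<and> v \<in> Vc n c \<and> edge n a v"
  by (auto simp: cw_def Uc_def Vc_def split: if_splits)

lemma nbrs_V: "j \<in> Vv n \<Longrightarrow> nbrs n j = {i. edge n i j}"
  using UV_disj by (auto simp: nbrs_def edge_def)

lemma nbrs_U: "i \<in> Uv n \<Longrightarrow> nbrs n i = {j. edge n i j}"
  using UV_disj by (auto simp: nbrs_def edge_def)

lemma rho_V: "v \<notin> Uc n c \<Longrightarrow>
  rho n c v = (\<lambda>a b. if a \<in> Uc n c \<and> b \<in> Uc n c then cw n c a v * cnj (cw n c b v) else 0)"
proof -
  assume v: "v \<notin> Uc n c"
  show ?thesis
  proof (cases "v \<in> Vc n c")
    case True then show ?thesis using v by (simp add: rho_def)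
  next
    case False
    then have "cw n c a v = 0" for a using cw_nz by blast
    then show ?thesis using v False by (simp add: rho_def fun_eq_iff)
  qed
qed

lemma norm1:
  assumes adm: "admissible n c" and j: "j \<in> Vc n c"
  shows "(\<Sum>k\<in>Uc n c. cw n c k j * cnj (cw n c k j)) = 1"
proof -
  have jV: "j \<in> Vv n" using j Vc_sub by blast
  have "(\<Sum>i\<in>nbrs n j \<inter> nbrs n j. c i j * cnj (c i j)) = (if j = j then 1 else 0)"
    using adm j unfolding admissible_def by blast
  then have "(\<Sum>i\<in>nbrs n j \<inter> nbrs n j. c i j * cnj (c i j)) = 1" by simp
  also have "nbrs n j \<inter> nbrs n j = {i. edge n i j}" using nbrs_V[OF jV] by simp
  finally have A: "(\<Sum>i\<in>{i. edge n i j}. c i j * cnj (c i j)) = 1" .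
  have sub1: "{i. edge n i j} \<subseteq> Uv n" using edge_UV by blast
  have "(\<Sum>i\<in>{i. edge n i j}. c i j * cnj (c i j)) = (\<Sum>i\<in>{i. edge n i j}. cw n c i j * cnj (cw n c i j))"
    by (rule sum.cong) (auto simp: cw_def)
  also have "\<dots> = (\<Sum>i\<in>Uv n. cw n c i j * cnj (cw n c i j))"
    by (rule sum.mono_neutral_left[OF finite_Uv sub1]) (auto simp: cw_def)
  also have "\<dots> = (\<Sum>i\<in>Uc n c. cw n c i j * cnj (cw n c i j))"
    by (rule sum.mono_neutral_right[OF finite_Uv Uc_sub]) (use cw_nz in fastforce)
  finally show ?thesis using A by simp
qed

lemma row:
  assumes adm: "admissible n c" and a: "a \<in> Uc n c" and b: "b \<in> Uc n c"
  shows "(\<Sum>v\<in>Vv n. cw n c a v * cnj (cw n c b v)) = (if a = b then 1 else 0)"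
proof -
  have aU: "a \<in> Uv n" and bU: "b \<in> Uv n" using a b Uc_sub by blast+
  have "(\<Sum>j\<in>nbrs n a \<inter> nbrs n b. c a j * cnj (c b j)) = (if a = b then 1 else 0)"
    using adm a b by (simp add: admissible_def)
  also have "nbrs n a \<inter> nbrs n b = {v. edge n a v \<and> edge n b v}"
    using nbrs_U[OF aU] nbrs_U[OF bU] by auto
  finally have A: "(\<Sum>v\<in>{v. edge n a v \<and> edge n b v}. c a v * cnj (c b v)) = (if a = b then 1 else 0)" .
  have sub1: "{v. edge n a v \<and> edge n b v} \<subseteq> Vv n" using edge_UV by blast
  have "(\<Sum>v\<in>{v. edge n a v \<and> edge n b v}. c a v * cnj (c b v))
      = (\<Sum>v\<in>{v. edge n a v \<and> edge n b v}. cw n c a v * cnj (cw n c b v))"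
    by (rule sum.cong) (auto simp: cw_def)
  also have "\<dots> = (\<Sum>v\<in>Vv n. cw n c a v * cnj (cw n c b v))"
    by (rule sum.mono_neutral_left[OF finite_Vv sub1]) (auto simp: cw_def)
  finally show ?thesis using A by simp
qed

lemma rank1_proj:
  assumes "(\<Sum>k\<in>I. f k * cnj (f k)) = 1"
  shows "is_proj I (\<lambda>a b. if a \<in> I \<and> b \<in> I then f a * cnj (f b) else (0::complex))"
proof -
  have "mmult I (\<lambda>a b. if a \<in> I \<and> b \<in> I then f a * cnj (f b) else 0)
           (\<lambda>a b. if a \<in> I \<and> b \<in> I then f a * cnj (f b) else 0) a b
        = (if a \<in> I \<and> b \<in> I then f a * cnj (f b) else 0)" for a b
  proof (cases "a \<in> I \<and> b \<in> I")
    case True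
    have "(\<Sum>k\<in>I. (f a * cnj (f k)) * (f k * cnj (f b))) = (\<Sum>k\<in>I. (f a * cnj (f b)) * (f k * cnj (f k)))"
      by (rule sum.cong) (auto simp: algebra_simps)
    also have "\<dots> = f a * cnj (f b)" using assms by (simp add: sum_distrib_left[symmetric])
    finally show ?thesis using True by (simp add: mmult_def)
  next
    case False then show ?thesis by (auto simp: mmult_def)
  qed
  then show ?thesis by (auto simp: is_proj_def madj_def fun_eq_iff)
qed

lemma rank1_range:
  assumes "(\<Sum>k\<in>I. f k * cnj (f k)) = 1" and fin: "finite I"
  shows "{mvec I (\<lambda>a b. if a \<in> I \<and> b \<in> I then f a * cnj (f b) else (0::complex)) w | w. \<forall>a. a \<notin> I \<longrightarrow> w a = 0}
     = {(\<lambda>a. s * (if a \<in> I then f a else 0)) | s. True}"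
proof (intro set_eqI iffI)
  fix x assume "x \<in> {mvec I (\<lambda>a b. if a \<in> I \<and> b \<in> I then f a * cnj (f b) else 0) w | w. \<forall>a. a \<notin> I \<longrightarrow> w a = 0}"
  then obtain w where x: "x = mvec I (\<lambda>a b. if a \<in> I \<and> b \<in> I then f a * cnj (f b) else 0) w" by blast
  have "x = (\<lambda>a. (\<Sum>b\<in>I. cnj (f b) * w b) * (if a \<in> I then f a else 0))"
    unfolding x mvec_def
    by (auto simp: fun_eq_iff sum_distrib_left sum_distrib_right algebra_simps intro!: sum.cong)
  then show "x \<in> {(\<lambda>a. s * (if a \<in> I then f a else 0)) | s. True}" by blast
next
  fix x assume "x \<in> {(\<lambda>a. s * (if a \<in> I then f a else 0)) | s. True}"
  then obtain s where x: "x = (\<lambda>a. s * (if a \<in> I then f a else 0))" by blast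
  define w where "w = (\<lambda>a. s * (if a \<in> I then f a else 0))"
  have "mvec I (\<lambda>a b. if a \<in> I \<and> b \<in> I then f a * cnj (f b) else 0) w a = x a" for a
  proof (cases "a \<in> I")
    case True
    have "(\<Sum>b\<in>I. (if a \<in> I \<and> b \<in> I then f a * cnj (f b) else 0) * w b)
        = (\<Sum>b\<in>I. (s * f a) * (f b * cnj (f b)))"
      by (rule sum.cong) (auto simp: w_def True algebra_simps)
    also have "\<dots> = s * f a" using assms(1) by (simp add: sum_distrib_left[symmetric])
    finally show ?thesis using True by (simp add: mvec_def x)
  next
    case False then show ?thesis by (simp add: mvec_def x)
  qed
  then have xe: "x = mvec I (\<lambda>a b. if a \<in> I \<and> b \<in> I then f a * cnj (f b) else 0) w"
    by (simp add: fun_eq_iff)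
  have "\<forall>a. a \<notin> I \<longrightarrow> w a = 0" by (simp add: w_def)
  with xe show "x \<in> {mvec I (\<lambda>a b. if a \<in> I \<and> b \<in> I then f a * cnj (f b) else 0) w | w. \<forall>a. a \<notin> I \<longrightarrow> w a = 0}"
    by blast
qed

theorem proposition4p4:
  fixes n :: nat and c :: "nat \<Rightarrow> nat \<Rightarrow> complex"
  assumes "n \<ge> 1" and "admissible n c"
  shows "extends_to_unital_star_hom n (Uc n c) (rho n c) \<and>
         (\<forall>j\<in>Vc n c. is_proj (Uc n c) (rho n c j) \<and>
            {mvec (Uc n c) (rho n c j) w | w. \<forall>a. a \<notin> Uc n c \<longrightarrow> w a = 0}
              = {(\<lambda>a. s * psi n c j a) | s. True})"
proof -
  note adm = assms(2)
  let ?I = "Uc n c"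
  have VnotU: "v \<in> Vv n \<Longrightarrow> v \<notin> ?I" for v using Uc_sub UV_disj by blast
  have VcnotU: "v \<in> Vc n c \<Longrightarrow> v \<notin> ?I" for v using Vc_sub VnotU by blast
  have projV: "is_proj ?I (rho n c j)" if j: "j \<in> Vc n c" for j
  proof -
    have e: "rho n c j = (\<lambda>a b. if a \<in> ?I \<and> b \<in> ?I then cw n c a j * cnj (cw n c b j) else 0)"
      by (rule rho_V[OF VcnotU[OF j]])
    show ?thesis unfolding e by (rule rank1_proj[OF norm1[OF adm j]])
  qed
  have rangeV: "{mvec ?I (rho n c j) w | w. \<forall>a. a \<notin> ?I \<longrightarrow> w a = 0}
              = {(\<lambda>a. s * psi n c j a) | s. True}" if j: "j \<in> Vc n c" for j
  proof -
    have e: "rho n c j = (\<lambda>a b. if a \<in> ?I \<and> b \<in> ?I then cw n c a j * cnj (cw n c b j) else 0)"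
      by (rule rho_V[OF VcnotU[OF j]])
    have p: "psi n c j = (\<lambda>a. if a \<in> ?I then cw n c a j else 0)" by (simp add: psi_def)
    show ?thesis unfolding e p by (rule rank1_range[OF norm1[OF adm j] finite_Uc])
  qed
  have projU: "is_proj ?I (rho n c x)" if x: "x \<in> ?I" for x
  proof -
    have e: "rho n c x = (\<lambda>a b. if a = x \<and> b = x then 1 else 0)" using x by (simp add: rho_def)
    have "(\<Sum>k\<in>?I. (if a = x \<and> k = x then 1 else 0) * (if k = x \<and> b = x then 1 else 0))
        = (\<Sum>k\<in>?I. if k = x then (if a = x \<and> b = x then 1 else 0) else (0::complex))" for a b
      by (rule sum.cong) auto
    also have "\<dots> a b = (if a = x \<and> b = x then 1 else 0)" for a b
      using x by (simp add: sum.delta[OF finite_Uc])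
    finally show ?thesis unfolding e by (simp add: is_proj_def mmult_def madj_def fun_eq_iff)
  qed
  have proj0: "is_proj ?I (\<lambda>a b. 0)" by (simp add: is_proj_def mmult_def madj_def fun_eq_iff)
  have projall: "\<forall>x\<in>Uv n \<union> Vv n. is_proj ?I (rho n c x)"
  proof
    fix x assume "x \<in> Uv n \<union> Vv n"
    show "is_proj ?I (rho n c x)"
    proof (cases "x \<in> ?I")
      case True then show ?thesis using projU by blast
    next
      case F: False
      show ?thesis
      proof (cases "x \<in> Vc n c")
        case True then show ?thesis using projV by blast
      next
        case False then show ?thesis using F proj0 by (simp add: rho_def)
      qed
    qed
  qed
  have sumU: "(\<lambda>a b. \<Sum>u\<in>Uv n. rho n c u a b) = mid ?I"
  proof (intro ext)
    fix a b
    have "(\<Sum>u\<in>Uv n. rho n c u a b) = (\<Sum>u\<in>Uv n. if u \<in> ?I \<and> a = u \<and> b = u then 1 else 0)"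
    proof (rule sum.cong)
      fix u assume u: "u \<in> Uv n"
      have "u \<notin> Vc n c" using u Vc_sub UV_disj by blast
      then show "rho n c u a b = (if u \<in> ?I \<and> a = u \<and> b = u then 1 else 0)"
        by (simp add: rho_def)
    qed simp
    also have "\<dots> = (\<Sum>u\<in>Uv n. if u = a then (if a \<in> ?I \<and> a = b then 1 else 0) else (0::complex))"
      by (rule sum.cong) auto
    also have "\<dots> = mid ?I a b"
      using Uc_sub by (auto simp: mid_def sum.delta[OF finite_Uv])
    finally show "(\<Sum>u\<in>Uv n. rho n c u a b) = mid ?I a b" .
  qed
  have sumV: "(\<lambda>a b. \<Sum>v\<in>Vv n. rho n c v a b) = mid ?I"
  proof (intro ext)
    fix a b
    have "(\<Sum>v\<in>Vv n. rho n c v a b) = (\<Sum>v\<in>Vv n. if a \<in> ?I \<and> b \<in> ?I then cw n c a v * cnj (cw n c b v) else 0)"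
      by (rule sum.cong) (simp_all add: rho_V[OF VnotU])
    also have "\<dots> = mid ?I a b"
      using row[OF adm, of a b] by (cases "a \<in> ?I \<and> b \<in> ?I") (auto simp: mid_def)
    finally show "(\<Sum>v\<in>Vv n. rho n c v a b) = mid ?I a b" .
  qed
  have orth: "\<forall>u\<in>Uv n. \<forall>v\<in>Vv n. \<not> edge n u v \<longrightarrow> mmult ?I (rho n c u) (rho n c v) = (\<lambda>a b. 0)"
  proof (intro ballI impI ext)
    fix u v a b assume u: "u \<in> Uv n" and v: "v \<in> Vv n" and ne: "\<not> edge n u v"
    show "mmult ?I (rho n c u) (rho n c v) a b = 0"
    proof (cases "u \<in> ?I")
      case True
      have "cw n c u v = 0" using ne by (simp add: cw_def)
      then have z: "rho n c v u b = 0" for b by (simp add: rho_V[OF VnotU[OF v]])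
      have eu: "rho n c u = (\<lambda>a b. if a = u \<and> b = u then 1 else 0)" using True by (simp add: rho_def)
      have "mmult ?I (rho n c u) (rho n c v) a b = (\<Sum>k\<in>?I. (if a = u \<and> k = u then 1 else 0) * rho n c v k b)"
        by (simp add: mmult_def eu)
      also have "\<dots> = (\<Sum>k\<in>?I. 0)"
        by (rule sum.cong) (auto simp: z)
      finally show ?thesis by simp
    next
      case False
      moreover have "u \<notin> Vc n c" using u UV_disj Vc_sub by blast
      ultimately have "rho n c u = (\<lambda>a b. 0)" by (simp add: rho_def)
      then show ?thesis by (simp add: mmult_def)
    qed
  qed
  have supp: "\<forall>x a b. (a \<notin> ?I \<or> b \<notin> ?I) \<longrightarrow> rho n c x a b = 0"
    by (auto simp: rho_def)
  show ?thesis
    using projall sumU sumV orth supp finite_Uc projV rangeV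
    by (simp add: extends_to_unital_star_hom_def Qn_relations_def)
qed

end
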